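(* Let $d \ge 1$ be an integer and let $n$ be an even integer such that $n \ge 2d+4$, except that $n = 2d+6$ is excluded when $d$ is even. Then a spherical 3-design on $S^d$ of size $n$ exists.
   Context: $S^d$ denotes the unit sphere in $\mathbb{R}^{d+1}$. A spherical $t$-design on $S^d$ of size $n$ is a finite collection $X$ of $n$ points of $S^d$ such that the average of every polynomial $f(x_0,\dots,x_d)$ of degree at most $t$ over $S^d$ (with respect to surface measure) equals $\frac{1}{|X|}\sum_{x\in X} f(x)$. *)

theory Defs
  imports "HOL-Analysis.Analysis"
begin

definition poly_fun_deg_le :: "nat \<Rightarrow> (real^'n::finite \<Rightarrow> real) \<Rightarrow> bool" where
  "poly_fun_deg_le t f \<longleftrightarrow>
     (\<exists>(A :: ('n \<Rightarrow> nat) set) (c :: ('n \<Rightarrow> nat) \<Rightarrow> real).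
        finite A \<and> (\<forall>\<alpha>\<in>A. (\<Sum>i\<in>UNIV. \<alpha> i) \<le> t) \<and>
        (\<forall>x. f x = (\<Sum>\<alpha>\<in>A. c \<alpha> * (\<Prod>i\<in>UNIV. (x $ i) ^ (\<alpha> i)))))"

text \<open>The normalized surface measure is the image of the uniform probability measure on the
  unit ball under the radial projection x \<mapsto> x / |x| (the cone construction).\<close>
definition sphere_avg :: "(real^'n::finite \<Rightarrow> real) \<Rightarrow> real" where
  "sphere_avg f =
     (LINT x : ball 0 1 | lborel. f (x /\<^sub>R norm x)) / measure lborel (ball (0::real^'n) 1)"

definition spherical_design :: "nat \<Rightarrow> (real^'n::finite) set \<Rightarrow> bool" where
  "spherical_design t X \<longleftrightarrow>
     finite X \<and> X \<noteq> {} \<and> X \<subseteq> sphere 0 1 \<and>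
     (\<forall>f. poly_fun_deg_le t f \<longrightarrow> sphere_avg f = (\<Sum>x\<in>X. f x) / real (card X))"

end

theory Submission
  imports Defs
begin


lemma meas_N: "(\<lambda>x::real^'n. x /\<^sub>R norm x) \<in> borel_measurable borel"
  by measurable

lemma meas_int:
  fixes g :: "real^'n \<Rightarrow> real"
  assumes "continuous_on UNIV g"
  shows "(\<lambda>x::real^'n. indicator (ball 0 1) x *\<^sub>R g (x /\<^sub>R norm x)) \<in> borel_measurable borel"
proof -
  have "(\<lambda>x::real^'n. g (x /\<^sub>R norm x)) \<in> borel_measurable borel"
    by (rule borel_measurable_continuous_on[OF assms meas_N])
  moreover have "ball (0::real^'n) 1 \<in> sets borel" by simp
  ultimately show ?thesis by (intro borel_measurable_scaleR borel_measurable_indicator)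
qed

lemma J_inv:
  fixes T :: "real^'n \<Rightarrow> real^'n" and g :: "real^'n \<Rightarrow> real"
  assumes D: "distr lborel borel T = lborel" and L: "linear T" and Nm: "\<And>x. norm (T x) = norm x"
    and g: "continuous_on UNIV g"
  shows "(LINT x:ball 0 1|lborel. g (T (x /\<^sub>R norm x))) = (LINT x:ball 0 1|lborel. g (x /\<^sub>R norm x))"
proof -
  have Tm: "T \<in> lborel \<rightarrow>\<^sub>M borel"
    using L by (simp add: borel_measurable_continuous_onI linear_continuous_on linear_linear)
  have "(LINT x:ball 0 1|lborel. g (x /\<^sub>R norm x)) =
        integral\<^sup>L (distr lborel borel T) (\<lambda>x. indicator (ball 0 1) x *\<^sub>R g (x /\<^sub>R norm x))"
    unfolding set_lebesgue_integral_def D ..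
  also have "\<dots> = (LINT x|lborel. indicator (ball 0 1) (T x) *\<^sub>R g (T x /\<^sub>R norm (T x)))"
    by (rule integral_distr[OF Tm meas_int[OF g]])
  also have "\<dots> = (LINT x:ball 0 1|lborel. g (T (x /\<^sub>R norm x)))"
    unfolding set_lebesgue_integral_def
  proof (rule Bochner_Integration.integral_cong[OF refl])
    fix x
    have "T (x /\<^sub>R norm x) = T x /\<^sub>R norm (T x)" using L Nm by (simp add: linear_scale)
    moreover have "indicator (ball 0 1) (T x) = (indicator (ball 0 1) x :: real)"
      using Nm by (simp add: indicator_def)
    ultimately show "indicator (ball 0 1) (T x) *\<^sub>R g (T x /\<^sub>R norm (T x)) =
      indicator (ball 0 1) x *\<^sub>R g (T (x /\<^sub>R norm x))" by simp
  qed
  finally show ?thesis ..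
qed

lemma Basis_vec_range: "(Basis :: (real^'n) set) = range (\<lambda>i. axis i 1)"
  by (auto simp: Basis_vec_def)

lemma prod_Basis_vec: "(\<Prod>b\<in>(Basis::(real^'n) set). f b) = (\<Prod>i\<in>UNIV. f (axis i 1))"
proof -
  have "inj (\<lambda>i::'n. axis i (1::real))" by (auto simp: inj_on_def axis_eq_axis)
  then show ?thesis unfolding Basis_vec_range by (simp add: prod.reindex)
qed

lemma lborel_signed_perm:
  fixes \<sigma> :: "'n::finite \<Rightarrow> 'n" and s :: "'n \<Rightarrow> real"
  assumes bs: "bij \<sigma>" and s: "\<And>i. s i = 1 \<or> s i = -1"
  shows "distr lborel borel (\<lambda>x::real^'n. \<chi> i. s i * x $ \<sigma> i) = lborel"
proof -
  define T where "T = (\<lambda>x::real^'n. \<chi> i. s i * x $ \<sigma> i)"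
  have lin: "linear T" unfolding T_def by (rule linearI) (auto simp: vec_eq_iff algebra_simps)
  have Tm: "T \<in> lborel \<rightarrow>\<^sub>M borel"
    using lin by (simp add: borel_measurable_continuous_onI linear_continuous_on linear_linear)
  define \<tau> where "\<tau> = inv \<sigma>"
  have st: "\<sigma> (\<tau> k) = k" for k unfolding \<tau>_def using bs by (simp add: bij_def surj_f_inv_f)
  have ts: "\<tau> (\<sigma> k) = k" for k unfolding \<tau>_def using bs by (simp add: bij_def inv_f_f)
  have btau: "bij \<tau>" unfolding \<tau>_def using bs by (simp add: bij_imp_bij_inv)
  have "lborel = distr lborel borel T"
  proof (rule lborel_eqI)
    fix l u :: "real^'n"
    assume le: "\<And>b. b \<in> Basis \<Longrightarrow> l \<bullet> b \<le> u \<bullet> b"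
    have leq: "l $ i \<le> u $ i" for i using le[of "axis i 1"] by (simp add: cart_eq_inner_axis)
    define l' where "l' = (\<chi> k. if s (\<tau> k) = 1 then l $ \<tau> k else - u $ \<tau> k)"
    define u' where "u' = (\<chi> k. if s (\<tau> k) = 1 then u $ \<tau> k else - l $ \<tau> k)"
    have pre: "T -` box l u \<inter> space lborel = box l' u'"
    proof (intro set_eqI iffI)
      fix x assume "x \<in> T -` box l u \<inter> space lborel"
      then have h: "l $ i < s i * x $ \<sigma> i \<and> s i * x $ \<sigma> i < u $ i" for i
        by (auto simp: T_def mem_box_cart)
      show "x \<in> box l' u'" unfolding mem_box_cart
      proof
        fix k show "l' $ k < x $ k \<and> x $ k < u' $ k"
          using h[of "\<tau> k"] s[of "\<tau> k"] unfolding st l'_def u'_def by auto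
      qed
    next
      fix x assume "x \<in> box l' u'"
      then have h: "l' $ k < x $ k \<and> x $ k < u' $ k" for k by (auto simp: mem_box_cart)
      have "l $ i < s i * x $ \<sigma> i \<and> s i * x $ \<sigma> i < u $ i" for i
      proof -
        have "l' $ \<sigma> i < x $ \<sigma> i \<and> x $ \<sigma> i < u' $ \<sigma> i" by (rule h)
        then show ?thesis using s[of i] unfolding l'_def u'_def by (auto simp: ts)
      qed
      then show "x \<in> T -` box l u \<inter> space lborel"
        unfolding T_def by (simp add: mem_box_cart)
    qed
    have le': "l' \<bullet> b \<le> u' \<bullet> b" if "b \<in> Basis" for b
      using that leq by (auto simp: Basis_vec_range cart_eq_inner_axis[symmetric] l'_def u'_def)
    have "emeasure (distr lborel borel T) (box l u) = emeasure lborel (T -` box l u \<inter> space lborel)"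
      by (rule emeasure_distr[OF Tm]) simp
    also have "\<dots> = emeasure lborel (box l' u')" by (simp only: pre)
    also have "\<dots> = (\<Prod>b\<in>Basis. (u' - l') \<bullet> b)" using le' by (rule emeasure_lborel_box)
    also have "\<dots> = ennreal (\<Prod>k\<in>UNIV. u $ \<tau> k - l $ \<tau> k)"
      unfolding prod_Basis_vec
      by (intro arg_cong[where f=ennreal] prod.cong refl) (auto simp: cart_eq_inner_axis[symmetric] l'_def u'_def)
    also have "\<dots> = ennreal (\<Prod>i\<in>UNIV. u $ i - l $ i)"
      using prod.reindex_bij_betw[OF btau, of "\<lambda>i. u $ i - l $ i"] by simp
    also have "\<dots> = (\<Prod>b\<in>Basis. (u - l) \<bullet> b)"
      unfolding prod_Basis_vec by (simp add: cart_eq_inner_axis[symmetric])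
    finally show "emeasure (distr lborel borel T) (box l u) = (\<Prod>b\<in>Basis. (u - l) \<bullet> b)" .
  qed simp
  then show ?thesis unfolding T_def by simp
qed

definition mnm :: "('n::finite \<Rightarrow> nat) \<Rightarrow> real^'n \<Rightarrow> real" where
  "mnm \<alpha> x = (\<Prod>i\<in>UNIV. (x$i)^(\<alpha> i))"

definition JJ :: "(real^'n::finite \<Rightarrow> real) \<Rightarrow> real" where
  "JJ g = (LINT x:ball 0 1|lborel. g (x /\<^sub>R norm x))"

lemma cont_mono: "continuous_on UNIV (mnm \<alpha>)"
  unfolding mnm_def by (intro continuous_intros)

lemma JJ_integrable:
  fixes g :: "real^'n::finite \<Rightarrow> real"
  assumes g: "continuous_on UNIV g"
  shows "integrable lborel (\<lambda>x::real^'n. indicator (ball 0 1) x *\<^sub>R g (x /\<^sub>R norm x))"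
proof -
  have "compact (g ` cball 0 1)" using g by (intro compact_continuous_image) (auto intro: continuous_on_subset)
  then obtain B where B: "\<And>y. y \<in> cball 0 1 \<Longrightarrow> norm (g y) \<le> B"
    by (meson bounded_iff compact_imp_bounded image_eqI)
  have nb: "x /\<^sub>R norm x \<in> cball 0 1" for x :: "real^'n"
    by (cases "x = 0") auto
  have "(\<lambda>x::real^'n. g (x /\<^sub>R norm x)) \<in> borel_measurable lborel"
  proof -
    have "(\<lambda>x::real^'n. x /\<^sub>R norm x) \<in> borel_measurable borel" by measurable
    then have "(\<lambda>x::real^'n. g (x /\<^sub>R norm x)) \<in> borel_measurable borel"
      by (rule borel_measurable_continuous_on[OF g])
    then show ?thesis by simp
  qed
  then show ?thesis
  proof (rule integrableI_bounded_set_indicator[where B=B, rotated])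
    show "ball (0::real^'n) 1 \<in> sets lborel" by simp
    show "emeasure lborel (ball (0::real^'n) 1) < \<infinity>" by (rule emeasure_lborel_ball_finite)
    show "AE x\<in>ball 0 1 in lborel. norm (g (x /\<^sub>R norm x)) \<le> B" using B nb by auto
  qed
qed

lemma signed_perm_linear: "linear (\<lambda>x::real^'n::finite. \<chi> i. s i * x $ \<sigma> i)"
  by (rule linearI) (auto simp: vec_eq_iff algebra_simps)

lemma signed_perm_norm:
  fixes \<sigma> :: "'n::finite \<Rightarrow> 'n" and s :: "'n \<Rightarrow> real"
  assumes bs: "bij \<sigma>" and s: "\<And>i. s i = 1 \<or> s i = -1"
  shows "norm (\<chi> i. s i * x $ \<sigma> i) = norm (x::real^'n)"
proof -
  have "(\<chi> i. s i * x $ \<sigma> i) \<bullet> (\<chi> i. s i * x $ \<sigma> i) = (\<Sum>i\<in>UNIV. x $ \<sigma> i * x $ \<sigma> i)"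
    unfolding inner_vec_def
  proof (intro sum.cong refl)
    fix i show "(\<chi> i. s i * x $ \<sigma> i) $ i \<bullet> (\<chi> i. s i * x $ \<sigma> i) $ i = x $ \<sigma> i * x $ \<sigma> i"
      using s[of i] by auto
  qed
  also have "\<dots> = (\<Sum>i\<in>UNIV. x $ i * x $ i)"
    using sum.reindex_bij_betw[OF bs, of "\<lambda>i. x $ i * x $ i"] by simp
  also have "\<dots> = x \<bullet> x" unfolding inner_vec_def by simp
  finally show ?thesis by (simp add: norm_eq_sqrt_inner)
qed

lemma JJ_signed_perm:
  fixes \<sigma> :: "'n::finite \<Rightarrow> 'n" and s :: "'n \<Rightarrow> real" and g :: "real^'n \<Rightarrow> real"
  assumes bs: "bij \<sigma>" and s: "\<And>i. s i = 1 \<or> s i = -1" and g: "continuous_on UNIV g"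
  shows "JJ (\<lambda>y. g (\<chi> i. s i * y $ \<sigma> i)) = JJ g"
  unfolding JJ_def
  by (rule J_inv[OF lborel_signed_perm[OF bs s] signed_perm_linear signed_perm_norm[OF bs s] g])

lemma JJ_minus: "JJ (\<lambda>y. - g y) = - JJ g"
  unfolding JJ_def set_lebesgue_integral_def by simp

lemma JJ_odd:
  assumes "odd (\<alpha> k)"
  shows "JJ (mnm \<alpha>) = 0"
proof -
  define s where "s = (\<lambda>i. if i = k then -1 else (1::real))"
  have "JJ (\<lambda>y. mnm \<alpha> (\<chi> i. s i * y $ id i)) = JJ (mnm \<alpha>)"
    by (rule JJ_signed_perm[OF bij_id]) (auto simp: s_def cont_mono)
  moreover have "mnm \<alpha> (\<chi> i. s i * y $ id i) = - mnm \<alpha> y" for y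
  proof -
    have "mnm \<alpha> (\<chi> i. s i * y $ id i) = (\<Prod>i\<in>UNIV. s i ^ \<alpha> i * (y $ i) ^ \<alpha> i)"
      unfolding mnm_def by (simp add: power_mult_distrib)
    also have "\<dots> = (\<Prod>i\<in>UNIV. s i ^ \<alpha> i) * mnm \<alpha> y"
      unfolding mnm_def by (simp add: prod.distrib)
    also have "(\<Prod>i\<in>UNIV. s i ^ \<alpha> i) = (\<Prod>i\<in>UNIV. if i = k then -1 else 1)"
      by (intro prod.cong refl) (use assms in \<open>auto simp: s_def\<close>)
    also have "\<dots> = -1" by (simp add: prod.If_cases)
    finally show ?thesis by simp
  qed
  ultimately have "JJ (\<lambda>y. - mnm \<alpha> y) = JJ (mnm \<alpha>)" by simp
  then show ?thesis unfolding JJ_minus by simp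
qed

lemma JJ_sq:
  fixes i k :: "'n::finite"
  shows "JJ (\<lambda>y::real^'n::finite. (y $ i)^2) = JJ (\<lambda>y. (y $ k)^2)"
proof -
  define \<sigma> where "\<sigma> = (\<lambda>j. if j = i then k else if j = k then i else j)"
  have "\<sigma> \<circ> \<sigma> = id" by (auto simp: \<sigma>_def fun_eq_iff)
  then have bs: "bij \<sigma>" using o_bij by blast
  have "JJ (\<lambda>y. (\<lambda>y. (y $ k)^2) (\<chi> j. (\<lambda>_. 1) j * y $ \<sigma> j)) = JJ (\<lambda>y::real^'n. (y $ k)^2)"
    by (rule JJ_signed_perm[OF bs], simp, intro continuous_intros)
  moreover have "(\<lambda>y::real^'n. (\<lambda>y. (y $ k)^2) (\<chi> j. (\<lambda>_. 1) j * y $ \<sigma> j)) = (\<lambda>y. (y $ i)^2)"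
    by (auto simp: \<sigma>_def fun_eq_iff)
  ultimately show ?thesis by simp
qed

lemma JJ_sum:
  assumes "finite A" "\<And>a. a \<in> A \<Longrightarrow> continuous_on UNIV (f a)"
  shows "JJ (\<lambda>y. \<Sum>a\<in>A. c a * f a y) = (\<Sum>a\<in>A. c a * JJ (f a))"
proof -
  have "JJ (\<lambda>y. \<Sum>a\<in>A. c a * f a y) =
     (LINT x|lborel. (\<Sum>a\<in>A. c a * (indicator (ball 0 1) x *\<^sub>R f a (x /\<^sub>R norm x))))"
    unfolding JJ_def set_lebesgue_integral_def
    by (intro Bochner_Integration.integral_cong refl) (simp add: sum_distrib_left algebra_simps)
  also have "\<dots> = (\<Sum>a\<in>A. (LINT x|lborel. c a * (indicator (ball 0 1) x *\<^sub>R f a (x /\<^sub>R norm x))))"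
    by (rule Bochner_Integration.integral_sum) (use assms JJ_integrable in auto)
  also have "\<dots> = (\<Sum>a\<in>A. c a * JJ (f a))"
    unfolding JJ_def set_lebesgue_integral_def by simp
  finally show ?thesis .
qed

lemma vol_pos: "measure lborel (ball (0::real^'n::finite) 1) > 0"
  by (rule content_ball_pos) simp

lemma JJ_const: "JJ (\<lambda>y::real^'n::finite. c) = measure lborel (ball (0::real^'n) 1) * c"
proof -
  have "emeasure lborel (ball (0::real^'n) 1) \<noteq> \<infinity>"
    using emeasure_lborel_ball_finite[of "0::real^'n" 1] by (simp add: less_top)
  then show ?thesis unfolding JJ_def by (subst set_integral_const) auto
qed

lemma JJ_normsq: "JJ (\<lambda>y::real^'n::finite. \<Sum>i\<in>UNIV. (y $ i)^2) = measure lborel (ball (0::real^'n) 1)"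
proof -
  have "JJ (\<lambda>y::real^'n. \<Sum>i\<in>UNIV. (y $ i)^2) = JJ (\<lambda>y::real^'n. 1)"
    unfolding JJ_def set_lebesgue_integral_def
  proof (rule integral_cong_AE)
    show "AE x in lborel. indicator (ball 0 1) (x::real^'n) *\<^sub>R (\<Sum>i\<in>UNIV. ((x /\<^sub>R norm x) $ i)^2) =
                          indicator (ball 0 1) x *\<^sub>R (1::real)"
    proof (rule eventually_mono[OF AE_lborel_singleton[of "0::real^'n"]])
      fix x :: "real^'n" assume "x \<noteq> 0"
      then have "norm (x /\<^sub>R norm x) = 1" by simp
      then have "(x /\<^sub>R norm x) \<bullet> (x /\<^sub>R norm x) = 1" using norm_eq_1 by blast
      then have "(\<Sum>i\<in>UNIV. ((x /\<^sub>R norm x) $ i)^2) = 1"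
        unfolding inner_vec_def by (simp add: power2_eq_square)
      then show "indicator (ball 0 1) x *\<^sub>R (\<Sum>i\<in>UNIV. ((x /\<^sub>R norm x) $ i)^2) =
                          indicator (ball 0 1) x *\<^sub>R (1::real)" by simp
    qed
  next
    have "continuous_on UNIV (\<lambda>y::real^'n. \<Sum>i\<in>UNIV. (y $ i)^2)" by (intro continuous_intros)
    from meas_int[OF this] show "(\<lambda>x::real^'n. indicator (ball 0 1) x *\<^sub>R (\<Sum>i\<in>UNIV. ((x /\<^sub>R norm x) $ i)^2)) \<in> borel_measurable lborel"
      by simp
  next
    have "continuous_on UNIV (\<lambda>y::real^'n. 1::real)" by (intro continuous_intros)
    from meas_int[OF this] show "(\<lambda>x::real^'n. indicator (ball 0 1) x *\<^sub>R (1::real)) \<in> borel_measurable lborel"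
      by simp
  qed
  also have "\<dots> = measure lborel (ball (0::real^'n) 1)" by (simp add: JJ_const)
  finally show ?thesis .
qed

lemma JJ_sq_val: "JJ (\<lambda>y::real^'n::finite. (y $ k)^2) = measure lborel (ball (0::real^'n) 1) / CARD('n)"
proof -
  have "JJ (\<lambda>y::real^'n. \<Sum>i\<in>UNIV. 1 * (y $ i)^2) = (\<Sum>i\<in>UNIV. 1 * JJ (\<lambda>y::real^'n. (y $ i)^2))"
    by (rule JJ_sum, simp, intro continuous_intros)
  also have "\<dots> = (\<Sum>i\<in>(UNIV::'n set). JJ (\<lambda>y::real^'n. (y $ k)^2))"
  proof (intro sum.cong refl)
    fix i show "1 * JJ (\<lambda>y::real^'n. (y $ i)^2) = JJ (\<lambda>y::real^'n. (y $ k)^2)"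
      using JJ_sq[of i k] by simp
  qed
  also have "\<dots> = CARD('n) * JJ (\<lambda>y::real^'n. (y $ k)^2)" by simp
  finally have e: "JJ (\<lambda>y::real^'n. \<Sum>i\<in>UNIV. 1 * (y $ i)^2) = CARD('n) * JJ (\<lambda>y::real^'n. (y $ k)^2)" .
  have "real CARD('n) * JJ (\<lambda>y::real^'n. (y $ k)^2) = measure lborel (ball (0::real^'n) 1)"
    using e JJ_normsq[where 'n='n] by (simp only: mult_1)
  then show ?thesis by (simp add: field_simps)
qed




lemma classify:
  fixes \<alpha> :: "'n::finite \<Rightarrow> nat"
  assumes "(\<Sum>i\<in>UNIV. \<alpha> i) \<le> 3"
  shows "(\<exists>k. odd (\<alpha> k)) \<or> \<alpha> = (\<lambda>_. 0) \<or> (\<exists>k. \<alpha> = (\<lambda>i. if i = k then 2 else 0))"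
proof (cases "(\<exists>k. odd (\<alpha> k)) \<or> \<alpha> = (\<lambda>_. 0)")
  case False
  then have ev: "\<And>i. even (\<alpha> i)" and "\<alpha> \<noteq> (\<lambda>_. 0)" by auto
  then obtain k where k: "\<alpha> k \<noteq> 0" by auto
  have pair: "\<alpha> k + \<alpha> i \<le> 3" if "i \<noteq> k" for i
  proof -
    have "(\<Sum>j\<in>{k,i}. \<alpha> j) \<le> (\<Sum>j\<in>UNIV. \<alpha> j)" by (rule sum_mono2) auto
    with that assms show ?thesis by simp
  qed
  have "\<alpha> k \<le> 3" using assms member_le_sum[of k UNIV \<alpha>] by simp
  with k ev[of k] have ak: "\<alpha> k = 2" by presburger
  have "\<alpha> i = 0" if "i \<noteq> k" for i using pair[OF that] ak ev[of i] by presburger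
  with ak have "\<alpha> = (\<lambda>i. if i = k then 2 else 0)" by auto
  then show ?thesis by blast
qed auto

lemma mono_neg: "mnm \<alpha> (- y) = (-1) ^ (\<Sum>i\<in>UNIV. \<alpha> i) * mnm \<alpha> y"
proof -
  have "mnm \<alpha> (- y) = (\<Prod>i\<in>UNIV. (-1) ^ \<alpha> i * (y $ i) ^ \<alpha> i)"
    unfolding mnm_def by (intro prod.cong refl) (simp add: power_minus[of "y $ _"])
  also have "\<dots> = (\<Prod>i\<in>UNIV. (-1::real) ^ \<alpha> i) * mnm \<alpha> y"
    unfolding mnm_def by (rule prod.distrib)
  finally show ?thesis by (simp add: power_sum)
qed

lemma mono_two:
  fixes \<alpha> :: "'n::finite \<Rightarrow> nat"
  assumes s: "(\<Sum>i\<in>UNIV. \<alpha> i) = 2" and k: "odd (\<alpha> k)"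
  shows "\<exists>j. j \<noteq> k \<and> (\<forall>y. mnm \<alpha> y = y $ k * y $ j)"
proof -
  have "\<alpha> k \<le> 2" using s member_le_sum[of k UNIV \<alpha>] by simp
  with k have ak: "\<alpha> k = 1" by presburger
  have r: "(\<Sum>i\<in>UNIV - {k}. \<alpha> i) = 1" using s ak sum.remove[of UNIV k \<alpha>] by simp
  then obtain j where j: "j \<in> UNIV - {k}" "\<alpha> j \<noteq> 0"
    by (metis one_neq_zero sum.neutral)
  have "\<alpha> j \<le> 1" using r member_le_sum[of j "UNIV - {k}" \<alpha>] j by simp
  with j have aj: "\<alpha> j = 1" by simp
  have r2: "(\<Sum>i\<in>UNIV - {k} - {j}. \<alpha> i) = 0" using r aj sum.remove[of "UNIV - {k}" j \<alpha>] j by simp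
  have z: "\<alpha> i = 0" if "i \<noteq> k" "i \<noteq> j" for i
    using r2 that by (simp add: sum_eq_0_iff)
  have "mnm \<alpha> y = y $ k * y $ j" for y
  proof -
    have "mnm \<alpha> y = (\<Prod>i\<in>UNIV. (if i = k then y $ k else 1) * (if i = j then y $ j else 1))"
      unfolding mnm_def using j ak aj z by (intro prod.cong refl) auto
    also have "\<dots> = y $ k * y $ j" by (simp add: prod.distrib)
    finally show ?thesis .
  qed
  with j show ?thesis by auto
qed

lemma avg_mono_odd: "odd (\<alpha> k) \<Longrightarrow> sphere_avg (mnm \<alpha>) = 0"
  using JJ_odd unfolding sphere_avg_def JJ_def by simp

lemma avg_mono_zero: "sphere_avg (mnm (\<lambda>_::'n::finite. 0)) = 1"
proof -
  have "mnm (\<lambda>_::'n. 0) = (\<lambda>_. 1)" by (simp add: mnm_def fun_eq_iff)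
  then show ?thesis using JJ_const[where c=1 and 'n='n] vol_pos[where 'n='n]
    unfolding sphere_avg_def JJ_def by simp
qed

lemma avg_mono_sq: "sphere_avg (mnm (\<lambda>i::'n::finite. if i = k then 2 else 0)) = 1 / CARD('n)"
proof -
  have "mnm (\<lambda>i::'n. if i = k then 2 else 0) = (\<lambda>y. (y $ k)^2)"
    by (simp add: mnm_def fun_eq_iff if_distrib[of "\<lambda>e. _ ^ e"] prod.If_cases)
  then show ?thesis using JJ_sq_val[of k] vol_pos[where 'n='n]
    unfolding sphere_avg_def JJ_def by simp
qed




lemma design_from_frame:
  fixes v :: "nat \<Rightarrow> real^'n::finite" and m :: nat
  assumes m: "m > 0" and unit: "\<And>j. j < m \<Longrightarrow> norm (v j) = 1" and inj: "inj_on v {..<m}"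
    and anti: "\<And>j j'. j < m \<Longrightarrow> j' < m \<Longrightarrow> v j \<noteq> - v j'"
    and frame: "\<And>i k. (\<Sum>j<m. v j $ i * v j $ k) = (if i = k then real m / CARD('n) else 0)"
  shows "spherical_design 3 (v ` {..<m} \<union> (\<lambda>j. - v j) ` {..<m}) \<and>
         card (v ` {..<m} \<union> (\<lambda>j. - v j) ` {..<m}) = 2 * m"
proof -
  define X where "X = v ` {..<m} \<union> (\<lambda>j. - v j) ` {..<m}"
  have disj: "v ` {..<m} \<inter> (\<lambda>j. - v j) ` {..<m} = {}" using anti by auto
  have inj2: "inj_on (\<lambda>j. - v j) {..<m}" using inj by (auto simp: inj_on_def)
  have cardX: "card X = 2 * m"
    unfolding X_def by (simp add: card_Un_disjoint disj card_image inj inj2)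
  have sumX: "(\<Sum>x\<in>X. F x) = (\<Sum>j<m. F (v j) + F (- v j))" for F :: "real^'n \<Rightarrow> real"
    unfolding X_def
    by (simp add: sum.union_disjoint disj sum.reindex inj inj2 sum.distrib)
  have key: "(\<Sum>x\<in>X. mnm \<alpha> x) / real (card X) = sphere_avg (mnm \<alpha>)"
    if deg: "(\<Sum>i\<in>UNIV. \<alpha> i) \<le> 3" for \<alpha> :: "'n \<Rightarrow> nat"
  proof -
    have cls: "(\<exists>k. odd (\<alpha> k)) \<or> \<alpha> = (\<lambda>_. 0) \<or> (\<exists>k. \<alpha> = (\<lambda>i. if i = k then 2 else 0))"
      by (rule classify[OF deg])
    show ?thesis
    proof (cases "\<exists>k. odd (\<alpha> k)")
      case True
      then obtain k where k: "odd (\<alpha> k)" by blast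
      have "(\<Sum>x\<in>X. mnm \<alpha> x) = 0"
      proof (cases "odd (\<Sum>i\<in>UNIV. \<alpha> i)")
        case True
        then show ?thesis unfolding sumX mono_neg by simp
      next
        case False
        have "\<alpha> k \<le> (\<Sum>i\<in>UNIV. \<alpha> i)" by (rule member_le_sum) auto
        moreover have "\<forall>a s::nat. odd a \<longrightarrow> \<not> odd s \<longrightarrow> s \<le> 3 \<longrightarrow> a \<le> s \<longrightarrow> s = 2" by presburger
        ultimately have s2: "(\<Sum>i\<in>UNIV. \<alpha> i) = 2" using k False deg by blast
        obtain j where j: "j \<noteq> k" "\<And>y. mnm \<alpha> y = y $ k * y $ j"
          using mono_two[OF s2 k] by blast
        have "(\<Sum>x\<in>X. mnm \<alpha> x) = 2 * (\<Sum>l<m. v l $ k * v l $ j)"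
          unfolding sumX j(2) by (simp add: sum_distrib_left mult.commute)
        also have "\<dots> = 0" using frame[of k j] j(1) by simp
        finally show ?thesis .
      qed
      then show ?thesis using avg_mono_odd[of \<alpha> k, OF k] by simp
    next
      case False
      with cls consider "\<alpha> = (\<lambda>_. 0)" | k where "\<alpha> = (\<lambda>i. if i = k then 2 else 0)" by blast
      then show ?thesis
      proof cases
        case 1
        have "(\<Sum>x\<in>X. mnm \<alpha> x) = 2 * m" unfolding sumX 1 by (simp add: mnm_def)
        then show ?thesis unfolding 1 avg_mono_zero cardX using m by simp
      next
        case 2
        have mk: "mnm \<alpha> y = (y $ k)^2" for y
          unfolding 2 by (simp add: mnm_def if_distrib[of "\<lambda>e. _ ^ e"] prod.If_cases)
        have "(\<Sum>x\<in>X. mnm \<alpha> x) = 2 * (\<Sum>l<m. v l $ k * v l $ k)"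
          unfolding sumX mk by (simp add: sum_distrib_left power2_eq_square)
        also have "\<dots> = 2 * (real m / CARD('n))" using frame[of k k] by simp
        finally show ?thesis unfolding 2 avg_mono_sq cardX using m by simp
      qed
    qed
  qed
  have design: "sphere_avg f = (\<Sum>x\<in>X. f x) / real (card X)" if pf: "poly_fun_deg_le 3 f" for f
  proof -
    obtain A c where A: "finite A" "\<forall>\<alpha>\<in>A. (\<Sum>i\<in>UNIV. \<alpha> i) \<le> 3"
      and f: "\<forall>x. f x = (\<Sum>\<alpha>\<in>A. c \<alpha> * (\<Prod>i\<in>UNIV. (x $ i) ^ (\<alpha> i)))"
      using pf unfolding poly_fun_deg_le_def by (elim exE conjE) (rule that)
    have fe: "f = (\<lambda>y. \<Sum>\<alpha>\<in>A. c \<alpha> * mnm \<alpha> y)" by (rule ext) (simp add: f mnm_def)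
    have "sphere_avg f = JJ f / measure lborel (ball (0::real^'n) 1)"
      unfolding sphere_avg_def JJ_def ..
    also have "JJ f = (\<Sum>\<alpha>\<in>A. c \<alpha> * JJ (mnm \<alpha>))"
      unfolding fe by (rule JJ_sum[OF A(1) cont_mono])
    finally have "sphere_avg f = (\<Sum>\<alpha>\<in>A. c \<alpha> * sphere_avg (mnm \<alpha>))"
      by (simp add: sum_divide_distrib sphere_avg_def JJ_def)
    also have "\<dots> = (\<Sum>\<alpha>\<in>A. c \<alpha> * ((\<Sum>x\<in>X. mnm \<alpha> x) / real (card X)))"
      using key A(2) by simp
    also have "\<dots> = (\<Sum>\<alpha>\<in>A. \<Sum>x\<in>X. c \<alpha> * mnm \<alpha> x) / real (card X)"
      by (simp add: sum_divide_distrib sum_distrib_left)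
    also have "(\<Sum>\<alpha>\<in>A. \<Sum>x\<in>X. c \<alpha> * mnm \<alpha> x) = (\<Sum>x\<in>X. \<Sum>\<alpha>\<in>A. c \<alpha> * mnm \<alpha> x)"
      by (rule sum.swap)
    also have "\<dots> = (\<Sum>x\<in>X. f x)" unfolding fe ..
    finally show ?thesis .
  qed
  have "finite X" unfolding X_def by simp
  moreover have "X \<noteq> {}" unfolding X_def using m by auto
  moreover have "X \<subseteq> sphere 0 1" unfolding X_def using unit by auto
  ultimately have "spherical_design 3 X" unfolding spherical_design_def using design by blast
  with cardX show ?thesis unfolding X_def by blast
qed




lemma cos_sum_zero:
  fixes m :: nat and s :: int and g :: real
  assumes "s \<noteq> 0" "\<bar>s\<bar> < int m"
  shows "(\<Sum>j<m. cos (2*pi * of_int s * real j/real m - g)) = 0"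
proof -
  have m0: "real m > 0" using assms by linarith
  define z where "z = cis (2*pi * of_int s/real m)"
  have zm: "z^m = 1"
  proof -
    have e: "real m * (2*pi * of_int s/real m) = 2*pi * of_int s" using m0 by simp
    have "z^m = cis (real m * (2*pi * of_int s/real m))" unfolding z_def by (rule Complex.DeMoivre)
    also have "\<dots> = cis (2*pi * of_int s)" by (simp only: e)
    also have "\<dots> = 1" by (rule cis_multiple_2pi) simp
    finally show ?thesis .
  qed
  have z1: "z \<noteq> 1"
  proof
    assume "z = 1"
    then have "cos (2*pi * of_int s/real m) = 1" unfolding z_def by (metis Re_complex_of_real cis.sel(1) of_real_1)
    then obtain x :: int where x: "2*pi * of_int s/real m = real_of_int x * 2 * pi" by (auto simp: cos_one_2pi_int)
    then have "real_of_int s = real_of_int x * real m" using m0 by (simp add: field_simps)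
    then have "s = x * int m" by (metis of_int_eq_iff of_int_mult of_int_of_nat_eq)
    then have sa: "\<bar>s\<bar> = \<bar>x\<bar> * int m" by (simp add: abs_mult)
    have "x \<noteq> 0" using \<open>s = x * int m\<close> assms(1) by auto
    then have "\<bar>x\<bar> \<ge> 1" by simp
    then have "1 * int m \<le> \<bar>x\<bar> * int m" by (intro mult_right_mono) auto
    with sa assms(2) show False by simp
  qed
  have "(1 - z) * (\<Sum>j<m. z^j) = 0" using one_diff_power_eq[of z m] zm by simp
  then have S: "(\<Sum>j<m. z^j) = 0" using z1 by simp
  have "(\<Sum>j<m. cis (2*pi * of_int s * real j/real m - g)) = (\<Sum>j<m. cis (-g) * z^j)"
  proof (rule sum.cong[OF refl])
    fix j assume "j \<in> {..<m}"
    have "cis (-g) * z^j = cis (-g + real j * (2*pi * of_int s/real m))"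
      unfolding z_def by (simp add: Complex.DeMoivre cis_mult)
    also have "-g + real j * (2*pi * of_int s/real m) = 2*pi * of_int s * real j/real m - g" by simp
    finally show "cis (2*pi * of_int s * real j/real m - g) = cis (-g) * z^j" by simp
  qed
  also have "\<dots> = 0" by (simp add: sum_distrib_left[symmetric] S)
  finally have "Re (\<Sum>j<m. cis (2*pi * of_int s * real j/real m - g)) = 0" by simp
  then show ?thesis by simp
qed


lemma cos_sum_int:
  fixes m :: nat and s :: int and g :: real
  assumes "\<bar>s\<bar> < int m"
  shows "(\<Sum>j<m. cos (2*pi * of_int s * real j/real m - g)) = (if s = 0 then real m * cos g else 0)"
proof (cases "s = 0")
  case True then show ?thesis by simp
next
  case False then show ?thesis using cos_sum_zero[OF False assms] by simp
qed

lemma cos_prod_sum: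
  fixes A B m :: nat and g h :: real
  assumes ev: "even (A + B)" and A: "A < m" and B: "B < m"
  shows "(\<Sum>j<m. cos (pi * real A * real j / real m - g) * cos (pi * real B * real j / real m - h)) =
    (if A = B then real m / 2 * cos (g - h) else 0) + (if A + B = 0 then real m / 2 * cos (g + h) else 0)"
proof -
  have m0: "real m > 0" using A by simp
  define s1 :: int where "s1 = (int A - int B) div 2"
  define s2 :: int where "s2 = (int A + int B) div 2"
  have s1: "2 * s1 = int A - int B" unfolding s1_def using ev by presburger
  have s2: "2 * s2 = int A + int B" unfolding s2_def using ev by presburger
  have r1: "2 * real_of_int s1 = real A - real B" using arg_cong[OF s1, of real_of_int] by simp
  have r2: "2 * real_of_int s2 = real A + real B" using arg_cong[OF s2, of real_of_int] by simp
  have b1: "\<bar>s1\<bar> < int m" using s1 A B by linarith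
  have b2: "\<bar>s2\<bar> < int m" using s2 A B by linarith
  have e: "cos (pi * real A * real j / real m - g) * cos (pi * real B * real j / real m - h) =
      (cos (2*pi * of_int s1 * real j/real m - (g - h)) + cos (2*pi * of_int s2 * real j/real m - (g + h))) / 2" for j
  proof -
    have x1: "pi * real A * real j / real m - g - (pi * real B * real j / real m - h) =
              2*pi * of_int s1 * real j/real m - (g - h)"
    proof -
      have rA: "real A = real B + 2 * real_of_int s1" using r1 by simp
      show ?thesis using m0 unfolding rA by (simp add: field_simps; simp add: algebra_simps)
    qed
    have x2: "pi * real A * real j / real m - g + (pi * real B * real j / real m - h) =
              2*pi * of_int s2 * real j/real m - (g + h)"
    proof -
      have rA: "real A = 2 * real_of_int s2 - real B" using r2 by simp
      show ?thesis using m0 unfolding rA by (simp add: field_simps; simp add: algebra_simps)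
    qed
    show ?thesis unfolding cos_times_cos x1 x2 ..
  qed
  have "(\<Sum>j<m. cos (pi * real A * real j / real m - g) * cos (pi * real B * real j / real m - h)) =
        ((\<Sum>j<m. cos (2*pi * of_int s1 * real j/real m - (g - h))) +
         (\<Sum>j<m. cos (2*pi * of_int s2 * real j/real m - (g + h)))) / 2"
    unfolding e by (simp only: sum_divide_distrib[symmetric] sum.distrib)
  also have "\<dots> = (if A = B then real m / 2 * cos (g - h) else 0) + (if A + B = 0 then real m / 2 * cos (g + h) else 0)"
    unfolding cos_sum_int[OF b1] cos_sum_int[OF b2] using s1 s2 by auto
  finally show ?thesis .
qed

definition aa :: "nat \<Rightarrow> nat \<Rightarrow> nat" where
  "aa D p = (if odd D then 2 * ((p+1) div 2) else 2 * (p div 2) + 1)"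
definition bb :: "nat \<Rightarrow> nat \<Rightarrow> real" where
  "bb D p = (if odd D then (if p = 0 then pi/4 else if odd p then 0 else pi/2) else (if odd p then pi/2 else 0))"
definition cc :: "nat \<Rightarrow> nat \<Rightarrow> nat \<Rightarrow> nat \<Rightarrow> real" where
  "cc D m p j = sqrt (2 / real D) * cos (pi * real (aa D p) * real j / real m - bb D p)"

lemma aa_even: "even (aa D p + aa D q)"
  unfolding aa_def by simp

lemma aa_lt:
  assumes "p < D" shows "aa D p < D"
proof -
  have 1: "odd D \<Longrightarrow> 2 * ((p+1) div 2) < D" using assms by presburger
  have 2: "\<not> odd D \<Longrightarrow> 2 * (p div 2) + 1 < D" using assms by presburger
  show ?thesis unfolding aa_def using 1 2 by simp
qed

lemma aa_pair:
  assumes "p \<noteq> q" "aa D p = aa D q"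
  shows "aa D p \<noteq> 0 \<and> cos (bb D p - bb D q) = 0"
proof (cases "odd D")
  case True
  then have "2 * ((p+1) div 2) = 2 * ((q+1) div 2)" using assms(2) unfolding aa_def by simp
  then have "(odd p \<and> q = p + 1) \<or> (odd q \<and> p = q + 1)" using assms(1) by presburger
  then show ?thesis
  proof
    assume h: "odd p \<and> q = p + 1"
    then have "p \<noteq> 0" "q \<noteq> 0" "even q" by presburger+
    then show ?thesis using True h unfolding aa_def bb_def by simp
  next
    assume h: "odd q \<and> p = q + 1"
    then have "p \<noteq> 0" "q \<noteq> 0" "even p" by presburger+
    then show ?thesis using True h unfolding aa_def bb_def by simp
  qed
next
  case False
  then have "2 * (p div 2) + 1 = 2 * (q div 2) + 1" using assms(2) unfolding aa_def by simp
  then have "(even p \<and> q = p + 1) \<or> (even q \<and> p = q + 1)" using assms(1) by presburger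
  then show ?thesis
  proof
    assume h: "even p \<and> q = p + 1"
    then have "odd q" by auto
    then show ?thesis using False h unfolding aa_def bb_def by simp
  next
    assume h: "even q \<and> p = q + 1"
    then have "odd p" by auto
    then show ?thesis using False h unfolding aa_def bb_def by simp
  qed
qed

lemma aa_zero:
  assumes "aa D p = 0" shows "cos (bb D p + bb D p) = 0"
proof -
  have "odd D" using assms unfolding aa_def by (cases "odd D") auto
  moreover have "p = 0" using assms calculation unfolding aa_def by simp
  ultimately show ?thesis unfolding bb_def by simp
qed

lemma cc_frame:
  assumes p: "p < D" and q: "q < D" and Dm: "D \<le> m"
  shows "(\<Sum>j<m. cc D m p j * cc D m q j) = (if p = q then real m / real D else 0)"
proof -
  have D0: "real D > 0" using p by simp
  have "(\<Sum>j<m. cc D m p j * cc D m q j) =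
        (2 / real D) * (\<Sum>j<m. cos (pi * real (aa D p) * real j / real m - bb D p) *
                                cos (pi * real (aa D q) * real j / real m - bb D q))"
    unfolding sum_distrib_left
  proof (intro sum.cong refl)
    fix j
    have sq: "sqrt (2 / real D) * sqrt (2 / real D) = 2 / real D" using D0 by simp
    show "cc D m p j * cc D m q j = 2 / real D * (cos (pi * real (aa D p) * real j / real m - bb D p) *
                                cos (pi * real (aa D q) * real j / real m - bb D q))"
    proof -
      have "cc D m p j * cc D m q j = (sqrt (2 / real D) * sqrt (2 / real D)) * (cos (pi * real (aa D p) * real j / real m - bb D p) *
                                cos (pi * real (aa D q) * real j / real m - bb D q))"
        unfolding cc_def by (simp only: mult_ac)
      then show ?thesis by (simp only: sq)
    qed
  qed
  also have "\<dots> = (2 / real D) * ((if aa D p = aa D q then real m / 2 * cos (bb D p - bb D q) else 0) +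
       (if aa D p + aa D q = 0 then real m / 2 * cos (bb D p + bb D q) else 0))"
    using aa_lt[OF p] aa_lt[OF q] Dm by (subst cos_prod_sum[OF aa_even]) auto
  also have "\<dots> = (if p = q then real m / real D else 0)"
  proof (cases "p = q")
    case True
    have z: "(if aa D p + aa D p = 0 then real m / 2 * cos (bb D p + bb D p) else 0) = 0"
      using aa_zero[of D p] by simp
    show ?thesis unfolding True using z[unfolded True] D0 by simp
  next
    case False
    have z1: "(if aa D p = aa D q then real m / 2 * cos (bb D p - bb D q) else 0) = 0"
      using aa_pair[OF False] by simp
    have z2: "(if aa D p + aa D q = 0 then real m / 2 * cos (bb D p + bb D q) else 0) = 0"
    proof -
      have ne: "aa D p = aa D q \<Longrightarrow> aa D p \<noteq> 0" using aa_pair[OF False, of D] by blast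
      show ?thesis using ne by auto
    qed
    show ?thesis unfolding z1 z2 using False by simp
  qed
  finally show ?thesis .
qed

lemma sum_pairs:
  fixes g :: "nat \<Rightarrow> 'a::comm_monoid_add" and k :: nat
  shows "(\<Sum>p<2 * k. g p) = (\<Sum>s<k. g (2 * s) + g (2 * s+1))"
  by (induction k) (auto simp: algebra_simps)

lemma cc_norm:
  assumes "D \<ge> 1"
  shows "(\<Sum>p<D. (cc D m p j)^2) = 1"
proof -
  define g where "g p = (cos (pi * real (aa D p) * real j / real m - bb D p))^2" for p
  have D0: "real D > 0" using assms by simp
  have "(\<Sum>p<D. (cc D m p j)^2) = (2 / real D) * (\<Sum>p<D. g p)"
    unfolding cc_def g_def sum_distrib_left using D0 by (simp add: power_mult_distrib)
  moreover have "(\<Sum>p<D. g p) = real D / 2"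
  proof (cases "odd D")
    case True
    then obtain k where k: "D = 2 * k + 1" by (metis oddE)
    have "(\<Sum>p<D. g p) = g 0 + (\<Sum>p<2 * k. g (Suc p))" unfolding k Suc_eq_plus1[symmetric] by (rule sum.lessThan_Suc_shift)
    also have "\<dots> = g 0 + (\<Sum>s<k. g (Suc (2 * s)) + g (Suc (2 * s+1)))" by (simp only: sum_pairs)
    also have "(\<Sum>s<k. g (Suc (2 * s)) + g (Suc (2 * s+1))) = (\<Sum>s<k. 1)"
    proof (intro sum.cong refl)
      fix s
      have a1: "aa D (Suc (2 * s)) = 2 * s+2" and a2: "aa D (Suc (2 * s+1)) = 2 * s+2"
        unfolding aa_def using True by auto
      have b1: "bb D (Suc (2 * s)) = 0" and b2: "bb D (Suc (2 * s+1)) = pi/2"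
        unfolding bb_def using True by auto
      show "g (Suc (2 * s)) + g (Suc (2 * s+1)) = 1"
        unfolding g_def a1 a2 b1 b2 by (simp add: cos_diff)
    qed
    also have "g 0 = 1/2"
    proof -
      have a0: "aa D 0 = 0" and b0: "bb D 0 = pi/4" unfolding aa_def bb_def using True by auto
      show ?thesis unfolding g_def a0 b0 by (simp add: cos_45 power_divide)
    qed
    finally show ?thesis unfolding k by simp
  next
    case False
    then obtain k where k: "D = 2 * k" by (metis evenE)
    have "(\<Sum>p<D. g p) = (\<Sum>s<k. g (2 * s) + g (2 * s+1))" unfolding k by (simp only: sum_pairs)
    also have "\<dots> = (\<Sum>s<k. 1)"
    proof (intro sum.cong refl)
      fix s
      have a1: "aa D (2 * s) = 2 * s+1" and a2: "aa D (2 * s+1) = 2 * s+1"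
        unfolding aa_def using False by auto
      have b1: "bb D (2 * s) = 0" and b2: "bb D (2 * s+1) = pi/2"
        unfolding bb_def using False by auto
      show "g (2 * s) + g (2 * s+1) = 1"
        unfolding g_def a1 a2 b1 b2 by (simp add: cos_diff)
    qed
    finally show ?thesis unfolding k by simp
  qed
  ultimately show ?thesis using D0 by simp
qed




lemma cc_anti:
  assumes D2: "2 \<le> D" and Dm: "D \<le> m" and j: "j < m" and j': "j' < m"
  shows "\<exists>p<D. cc D m p j \<noteq> - cc D m p j'"
proof -
  have c0: "sqrt (2 / real D) > 0" using D2 by simp
  have m0: "real m > 0" using j by simp
  show ?thesis
  proof (cases "odd D")
    case True
    have a0: "aa D 0 = 0" and b0: "bb D 0 = pi/4" unfolding aa_def bb_def using True by auto
    have pos: "cc D m 0 i > 0" for i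
      unfolding cc_def a0 b0 using c0 by (simp add: cos_45)
    have "cc D m 0 j \<noteq> - cc D m 0 j'" using pos[of j] pos[of j'] by linarith
    then show ?thesis using D2 by (intro exI[of _ 0]) auto
  next
    case False
    have a0: "aa D 0 = 1" and b0: "bb D 0 = 0" and a1: "aa D 1 = 1" and b1: "bb D 1 = pi/2"
      unfolding aa_def bb_def using False by auto
    have e0: "cc D m 0 i = sqrt (2 / real D) * cos (pi * real i / real m)" for i
      unfolding cc_def a0 b0 by simp
    have e1: "cc D m 1 i = sqrt (2 / real D) * sin (pi * real i / real m)" for i
      unfolding cc_def a1 b1 by (simp add: cos_diff)
    have sge: "sin (pi * real i / real m) \<ge> 0" if "i < m" for i
      using that m0 by (intro sin_ge_zero) (auto simp: field_simps)
    have sgt: "sin (pi * real i / real m) > 0" if "i < m" "i > 0" for i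
      using that m0 by (intro sin_gt_zero) (auto simp: field_simps)
    show ?thesis
    proof (rule ccontr)
      assume "\<not> ?thesis"
      then have h0: "cc D m 0 j = - cc D m 0 j'" and h1: "cc D m 1 j = - cc D m 1 j'" using D2 by auto
      from h1 have "sqrt (2 / real D) * (sin (pi * real j / real m) + sin (pi * real j' / real m)) = 0"
        unfolding e1 by (simp add: algebra_simps)
      then have "sin (pi * real j / real m) + sin (pi * real j' / real m) = 0"
        using c0 by simp
      then have "sin (pi * real j / real m) = - sin (pi * real j' / real m)" by linarith
      with sge[OF j] sge[OF j'] have z: "sin (pi * real j / real m) = 0" "sin (pi * real j' / real m) = 0" by linarith+
      have "j = 0"
      proof (rule ccontr)
        assume "j \<noteq> 0" then have "sin (pi * real j / real m) > 0" using sgt[OF j] by simp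
        with z(1) show False by simp
      qed
      moreover have "j' = 0"
      proof (rule ccontr)
        assume "j' \<noteq> 0" then have "sin (pi * real j' / real m) > 0" using sgt[OF j'] by simp
        with z(2) show False by simp
      qed
      ultimately have "j = 0" "j' = 0" by auto
      with h0 show False unfolding e0 using c0 by simp
    qed
  qed
qed

lemma bd_pi: "i < m \<Longrightarrow> 0 \<le> pi * real i / real m \<and> pi * real i / real m \<le> pi"
proof -
  assume that: "i < m"
  have m0: "real m > 0" using that by simp
  have "real i / real m \<le> 1" using that m0 by simp
  then have "pi * (real i / real m) \<le> pi * 1" by (intro mult_left_mono) auto
  then show ?thesis by simp
qed

lemma cc_inj:
  assumes D2: "2 \<le> D" and Dm: "D \<le> m" and j: "j < m" and j': "j' < m"
    and eq: "\<And>p. p < D \<Longrightarrow> cc D m p j = cc D m p j'"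
  shows "j = j'"
proof -
  have c0: "sqrt (2 / real D) > 0" using D2 by simp
  have m0: "real m > 0" using j by simp
  show ?thesis
  proof (cases "odd D")
    case True
    then have D3: "3 \<le> D" using D2 by presburger
    have a1: "aa D 1 = 2" and b1: "bb D 1 = 0" and a2: "aa D 2 = 2" and b2: "bb D 2 = pi/2"
      unfolding aa_def bb_def using True by auto
    define x where "x = pi * 2 * real j / real m"
    define y where "y = pi * 2 * real j' / real m"
    have "cc D m 1 j = cc D m 1 j'" "cc D m 2 j = cc D m 2 j'" using eq D3 by auto
    then have cx: "cos x = cos y" and sx: "sin x = sin y"
      unfolding cc_def a1 b1 a2 b2 x_def y_def using c0 by (simp_all add: cos_diff)
    have "cos (x - y) = 1" unfolding cos_diff cx sx by (simp add: power2_eq_square[symmetric])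
    then obtain n :: int where n: "x - y = real_of_int n * 2 * pi" by (auto simp: cos_one_2pi_int)
    have "real j - real j' = (x - y) * real m / (2 * pi)"
      unfolding x_def y_def using m0 by (simp add: field_simps)
    also have "\<dots> = real_of_int n * real m" unfolding n by simp
    finally have "real j - real j' = real_of_int n * real m" .
    then have "real_of_int (int j - int j') = real_of_int (n * int m)" by simp
    then have nn: "int j - int j' = n * int m" by (simp only: of_int_eq_iff)
    have "n = 0"
    proof (rule ccontr)
      assume "n \<noteq> 0"
      then have "\<bar>n\<bar> \<ge> 1" by simp
      then have "1 * int m \<le> \<bar>n\<bar> * int m" by (intro mult_right_mono) auto
      moreover have "\<bar>int j - int j'\<bar> < int m" using j j' by linarith
      ultimately show False using nn by (simp add: abs_mult)
    qed
    with nn show ?thesis by simp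
  next
    case False
    have a0: "aa D 0 = 1" and b0: "bb D 0 = 0" unfolding aa_def bb_def using False by auto
    have "cc D m 0 j = cc D m 0 j'" using eq D2 by auto
    then have ce: "cos (pi * real j / real m) = cos (pi * real j' / real m)"
      unfolding cc_def a0 b0 using c0 by simp
    from ce have "pi * real j / real m = pi * real j' / real m"
      using bd_pi[OF j] bd_pi[OF j'] cos_inj_pi by blast
    then show ?thesis using m0 by simp
  qed
qed




theorem proposition3p2:
  fixes d n :: nat
  assumes "d \<ge> 1"
    and "CARD('n::finite) = d + 1"
    and "even n"
    and "n \<ge> 2 * d + 4"
    and "\<not> (even d \<and> n = 2 * d + 6)"
  shows "\<exists>X :: (real^'n) set. spherical_design 3 X \<and> card X = n"
proof -
  define D where "D = CARD('n)"
  define m where "m = n div 2"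
  have D2: "2 \<le> D" unfolding D_def using assms(1,2) by simp
  have nm: "n = 2 * m" unfolding m_def using assms(3) by simp
  have Dm: "D \<le> m" unfolding D_def m_def using assms(2,3,4) by simp
  have m0: "m > 0" using D2 Dm by simp
  obtain h where h: "bij_betw h (UNIV::'n set) {0..<D}"
    using ex_bij_betw_finite_nat[of "UNIV::'n set"] unfolding D_def by auto
  have hlt: "h i < D" for i using h by (auto simp: bij_betw_def)
  have hinj: "h i = h k \<longleftrightarrow> i = k" for i k using h by (auto simp: bij_betw_def inj_on_def)
  have hsurj: "\<exists>i. h i = p" if "p < D" for p
  proof -
    have "p \<in> h ` UNIV" using h that by (simp add: bij_betw_def)
    then show ?thesis by auto
  qed
  define v where "v j = (\<chi> i. cc D m (h i) j)" for j
  have unit: "norm (v j) = 1" for j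
  proof -
    have "v j \<bullet> v j = (\<Sum>i\<in>UNIV. (cc D m (h i) j)^2)"
      unfolding v_def inner_vec_def by (simp add: power2_eq_square)
    also have "\<dots> = (\<Sum>p\<in>{0..<D}. (cc D m p j)^2)"
      by (rule sum.reindex_bij_betw[OF h])
    also have "\<dots> = 1" using cc_norm[of D m j] D2 by (simp add: atLeast0LessThan)
    finally show ?thesis by (simp add: norm_eq_1)
  qed
  have frame: "(\<Sum>j<m. v j $ i * v j $ k) = (if i = k then real m / CARD('n) else 0)" for i k
    unfolding v_def using cc_frame[OF hlt[of i] hlt[of k] Dm] hinj[of i k] by (simp add: D_def)
  have inj: "inj_on v {..<m}"
  proof (rule inj_onI)
    fix j j' assume j: "j \<in> {..<m}" and j': "j' \<in> {..<m}" and e: "v j = v j'"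
    have "cc D m p j = cc D m p j'" if pD: "p < D" for p
    proof -
      obtain i where "h i = p" using hsurj[OF pD] by blast
      moreover have "v j $ i = v j' $ i" using e by simp
      then have "cc D m (h i) j = cc D m (h i) j'" unfolding v_def by simp
      ultimately show ?thesis by simp
    qed
    then show "j = j'" using j j' by (intro cc_inj[OF D2 Dm]) auto
  qed
  have anti: "v j \<noteq> - v j'" if j: "j < m" and j': "j' < m" for j j'
  proof
    assume e: "v j = - v j'"
    have "cc D m p j = - cc D m p j'" if pD: "p < D" for p
    proof -
      obtain i where "h i = p" using hsurj[OF pD] by blast
      moreover have "v j $ i = (- v j') $ i" using e by simp
      then have "cc D m (h i) j = - cc D m (h i) j'" unfolding v_def by simp
      ultimately show ?thesis by simp
    qed
    moreover obtain p where "p < D" "cc D m p j \<noteq> - cc D m p j'" using cc_anti[OF D2 Dm j j'] by blast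
    ultimately show False by blast
  qed
  have "spherical_design 3 (v ` {..<m} \<union> (\<lambda>j. - v j) ` {..<m}) \<and>
         card (v ` {..<m} \<union> (\<lambda>j. - v j) ` {..<m}) = 2 * m"
    by (rule design_from_frame[OF m0 unit inj anti frame])
  then show ?thesis unfolding nm by blast
qed


end
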